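(* Let $(X,d)$ be a Hadamard space, $\|\cdot\|$ a norm on $\mathbb R^s$, and $f:\mathbb R^s\to X$ Lipschitz with constant $C>0$, i.e. $d(f(t),f(u))\le C\|t-u\|$. Let $S$ be the barycentric scheme on $X$ of a mask $\mathbf a$ with $\operatorname{supp}(\mathbf a)\subseteq\{v\in\mathbb R^s:\|v\|\le r\}$, and suppose $S$ is convergent. For $h>0$ let $x_i=f(hi)$, $i\in\mathbb Z^s$ (assume $x$ bounded). Then $$\sup_{t\in\mathbb R^s}d\big(S^\infty x(t/h),f(t)\big)\le rCh.$$
   Context: Hadamard space: complete metric space $(X,d)$ such that for any $x_0,x_1\in X$ there is $y$ with $d(z,y)^2\le\frac12d(z,x_0)^2+\frac12d(z,x_1)^2-\frac14d(x_0,x_1)^2$ for all $z$. Mask: finitely supported nonnegative $(a_i)_{i\in\mathbb Z^s}$ with $\sum_ja_{i-2j}=1$ for all $i$. Barycentric scheme: $Sx_i=\operatorname{argmin}_{y\in X}\sum_ja_{i-2j}d^2(x_j,y)$. $S$ convergent means: for every bounded $x$ there is a continuous $S^\infty x:\mathbb R^s\to X$ with $\sup_jd(S^\infty x(j/2^n),(S^nx)_j)\to0$ as $n\to\infty$. *)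

theory Defs
  imports "HOL-Analysis.Analysis"
begin

text \<open>Hadamard space: a complete metric space (type class complete_space) satisfying
  the midpoint (CAT(0)) inequality.\<close>
definition hadamard :: "'a::complete_space itself \<Rightarrow> bool" where
  "hadamard _ \<longleftrightarrow> (\<forall>x0 x1::'a. \<exists>y. \<forall>z.
      (dist z y)\<^sup>2 \<le> (dist z x0)\<^sup>2 / 2 + (dist z x1)\<^sup>2 / 2 - (dist x0 x1)\<^sup>2 / 4)"

definition is_norm :: "(real ^ 's \<Rightarrow> real) \<Rightarrow> bool" where
  "is_norm N \<longleftrightarrow> (\<forall>v. 0 \<le> N v) \<and> (\<forall>v. N v = 0 \<longleftrightarrow> v = 0)
     \<and> (\<forall>c v. N (c *\<^sub>R v) = \<bar>c\<bar> * N v) \<and> (\<forall>u v. N (u + v) \<le> N u + N v)"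

definition vec_of_int :: "int ^ 's \<Rightarrow> real ^ 's" where
  "vec_of_int i = (\<chi> k. real_of_int (i $ k))"

definition twice :: "int ^ 's \<Rightarrow> int ^ 's" where
  "twice j = (\<chi> k. 2 * j $ k)"

definition is_mask :: "(int ^ 's \<Rightarrow> real) \<Rightarrow> bool" where
  "is_mask a \<longleftrightarrow> finite {i. a i \<noteq> 0} \<and> (\<forall>i. 0 \<le> a i)
     \<and> (\<forall>i. (\<Sum>j\<in>{j. a (i - twice j) \<noteq> 0}. a (i - twice j)) = 1)"

definition bary_step :: "(int ^ 's \<Rightarrow> real) \<Rightarrow> (int ^ 's \<Rightarrow> 'a::metric_space) \<Rightarrow> int ^ 's \<Rightarrow> 'a" where
  "bary_step a x i = (SOME y. \<forall>z.
      (\<Sum>j\<in>{j. a (i - twice j) \<noteq> 0}. a (i - twice j) * (dist (x j) y)\<^sup>2)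
      \<le> (\<Sum>j\<in>{j. a (i - twice j) \<noteq> 0}. a (i - twice j) * (dist (x j) z)\<^sup>2))"

definition is_bary_limit :: "(int ^ 's \<Rightarrow> real) \<Rightarrow> (int ^ 's \<Rightarrow> 'a::metric_space) \<Rightarrow> (real ^ 's \<Rightarrow> 'a) \<Rightarrow> bool" where
  "is_bary_limit a x F \<longleftrightarrow> continuous_on UNIV F \<and>
     (\<forall>e>0. \<forall>\<^sub>F n in sequentially. \<forall>j.
        dist (F ((1 / 2 ^ n) *\<^sub>R vec_of_int j)) ((bary_step a ^^ n) x j) \<le> e)"

definition bary_convergent :: "(int ^ 's \<Rightarrow> real) \<Rightarrow> 'a::metric_space itself \<Rightarrow> bool" where
  "bary_convergent a _ \<longleftrightarrow> (\<forall>x :: int ^ 's \<Rightarrow> 'a. bounded (range x) \<longrightarrow> (\<exists>F. is_bary_limit a x F))"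

definition bary_limit :: "(int ^ 's \<Rightarrow> real) \<Rightarrow> (int ^ 's \<Rightarrow> 'a::metric_space) \<Rightarrow> real ^ 's \<Rightarrow> 'a" where
  "bary_limit a x = (SOME F. is_bary_limit a x F)"

end

theory Submission
  imports Defs
begin

definition geo_ineq :: "'a::metric_space \<Rightarrow> 'a \<Rightarrow> real \<Rightarrow> 'a \<Rightarrow> bool" where
  "geo_ineq y z t m \<longleftrightarrow> (\<forall>x. (dist x m)\<^sup>2 \<le> (1 - t) * (dist x y)\<^sup>2 + t * (dist x z)\<^sup>2 - t * (1 - t) * (dist y z)\<^sup>2)"

lemma geo_dist:
  assumes "geo_ineq y z t m" "0 \<le> t" "t \<le> 1"
  shows "dist y m = t * dist y z"
proof -
  let ?D = "dist y z"
  have 1: "(dist y m)\<^sup>2 \<le> (t * ?D)\<^sup>2"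
    using assms(1)[unfolded geo_ineq_def, rule_format, of y] by (simp add: power2_eq_square algebra_simps)
  have 2: "(dist z m)\<^sup>2 \<le> ((1 - t) * ?D)\<^sup>2"
    using assms(1)[unfolded geo_ineq_def, rule_format, of z] by (simp add: dist_commute power2_eq_square algebra_simps)
  have a: "dist y m \<le> t * ?D" using power2_le_imp_le[OF 1] assms by simp
  have b: "dist z m \<le> (1 - t) * ?D" using power2_le_imp_le[OF 2] assms by simp
  have "?D \<le> dist y m + dist z m" using dist_triangle[of y z m] by (simp add: dist_commute)
  with a b show ?thesis by (simp add: algebra_simps)
qed

lemma geo_exists:
  assumes H: "hadamard TYPE('a::complete_space)"
  shows "\<exists>m. geo_ineq y z (1 / 2 ^ k) (m::'a)"
proof (induction k)
  case 0
  show ?case by (rule exI[of _ z]) (simp add: geo_ineq_def)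
next
  case (Suc k)
  then obtain m where m: "geo_ineq y z (1 / 2 ^ k) m" by blast
  let ?t = "1 / 2 ^ k :: real"
  have t0: "0 \<le> ?t" and t1: "?t \<le> 1" by auto
  have dm: "dist y m = ?t * dist y z" using geo_dist[OF m t0 t1] .
  obtain p where p: "\<forall>x. (dist x p)\<^sup>2 \<le> (dist x y)\<^sup>2 / 2 + (dist x m)\<^sup>2 / 2 - (dist y m)\<^sup>2 / 4"
    using H unfolding hadamard_def by blast
  have "geo_ineq y z (1 / 2 ^ Suc k) p"
    unfolding geo_ineq_def
  proof
    fix x
    have "(dist x p)\<^sup>2 \<le> (dist x y)\<^sup>2 / 2 + (dist x m)\<^sup>2 / 2 - (dist y m)\<^sup>2 / 4" using p by blast
    also have "\<dots> \<le> (dist x y)\<^sup>2 / 2 + ((1 - ?t) * (dist x y)\<^sup>2 + ?t * (dist x z)\<^sup>2 - ?t * (1 - ?t) * (dist y z)\<^sup>2) / 2 - (?t * dist y z)\<^sup>2 / 4"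
      using m[unfolded geo_ineq_def, rule_format, of x] dm by simp
    also have "\<dots> = (1 - 1 / 2 ^ Suc k) * (dist x y)\<^sup>2 + (1 / 2 ^ Suc k) * (dist x z)\<^sup>2 - (1 / 2 ^ Suc k) * (1 - 1 / 2 ^ Suc k) * (dist y z)\<^sup>2"
      by (simp add: field_simps power2_eq_square)
    finally show "(dist x p)\<^sup>2 \<le> (1 - 1 / 2 ^ Suc k) * (dist x y)\<^sup>2 + (1 / 2 ^ Suc k) * (dist x z)\<^sup>2 - (1 / 2 ^ Suc k) * (1 - 1 / 2 ^ Suc k) * (dist y z)\<^sup>2" .
  qed
  then show ?case by blast
qed


lemma pow_half_0: "(\<lambda>k. 1 / (2::real) ^ k) \<longlonglongrightarrow> 0"
  using LIMSEQ_inverse_realpow_zero[of "2::real"] by (simp add: inverse_eq_divide)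

lemma min_bound:
  fixes X :: "'b \<Rightarrow> 'a::complete_space"
  assumes H: "hadamard TYPE('a)" and fin: "finite J" and w0: "\<forall>j\<in>J. 0 \<le> w j" and w1: "(\<Sum>j\<in>J. w j) = 1"
    and ymin: "\<forall>z. (\<Sum>j\<in>J. w j * (dist (X j) y)\<^sup>2) \<le> (\<Sum>j\<in>J. w j * (dist (X j) z)\<^sup>2)"
    and R: "\<forall>j\<in>J. dist (X j) z \<le> R"
  shows "dist y z \<le> R"
proof -
  let ?D = "dist y z"
  let ?G = "\<Sum>j\<in>J. w j * (dist (X j) y)\<^sup>2"
  let ?Q = "\<Sum>j\<in>J. w j * (dist (X j) z)\<^sup>2"
  have "J \<noteq> {}" using w1 by auto
  then obtain j0 where "j0 \<in> J" by blast
  hence R0: "0 \<le> R" using R by (meson dual_order.trans zero_le_dist)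
  have QR: "?Q \<le> R\<^sup>2"
  proof -
    have "?Q \<le> (\<Sum>j\<in>J. w j * R\<^sup>2)"
      apply (rule sum_mono) using w0 R by (simp add: mult_left_mono power_mono)
    also have "\<dots> = R\<^sup>2" using w1 by (simp add: sum_distrib_right[symmetric])
    finally show ?thesis .
  qed
  have G0: "0 \<le> ?G" using w0 by (simp add: sum_nonneg)
  have key: "(1 - 1 / 2 ^ k) * ?D\<^sup>2 \<le> R\<^sup>2" for k :: nat
  proof -
    let ?t = "1 / 2 ^ k :: real"
    obtain m where m: "geo_ineq y z ?t m" using geo_exists[OF H] by blast
    have "?G \<le> (\<Sum>j\<in>J. w j * (dist (X j) m)\<^sup>2)" using ymin by blast
    also have "\<dots> \<le> (\<Sum>j\<in>J. w j * ((1 - ?t) * (dist (X j) y)\<^sup>2 + ?t * (dist (X j) z)\<^sup>2 - ?t * (1 - ?t) * ?D\<^sup>2))"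
      apply (rule sum_mono) using w0 m unfolding geo_ineq_def by (simp add: mult_left_mono)
    also have "\<dots> = (1 - ?t) * ?G + ?t * ?Q - ?t * (1 - ?t) * ?D\<^sup>2"
    proof -
      have c: "(\<Sum>j\<in>J. w j * c) = c" for c :: real using w1 by (simp add: sum_distrib_right[symmetric])
      have "(\<Sum>j\<in>J. w j * ((1 - ?t) * (dist (X j) y)\<^sup>2 + ?t * (dist (X j) z)\<^sup>2 - ?t * (1 - ?t) * ?D\<^sup>2))
        = (\<Sum>j\<in>J. (1 - ?t) * (w j * (dist (X j) y)\<^sup>2) + ?t * (w j * (dist (X j) z)\<^sup>2) - w j * (?t * (1 - ?t) * ?D\<^sup>2))"
        by (rule sum.cong) (simp_all add: algebra_simps)
      also have "\<dots> = (1 - ?t) * ?G + ?t * ?Q - ?t * (1 - ?t) * ?D\<^sup>2"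
        by (simp only: sum.distrib sum_subtractf sum_distrib_left[symmetric] c)
      finally show ?thesis .
    qed
    finally have "?t * ?G \<le> ?t * (?Q - (1 - ?t) * ?D\<^sup>2)" by (simp add: algebra_simps)
    hence "?G \<le> ?Q - (1 - ?t) * ?D\<^sup>2" by (rule mult_left_le_imp_le) simp
    thus ?thesis using G0 QR by linarith
  qed
  have "(\<lambda>k. (1 - 1 / 2 ^ k) * ?D\<^sup>2) \<longlonglongrightarrow> (1 - 0) * ?D\<^sup>2"
    by (intro tendsto_intros) (rule pow_half_0)
  hence "?D\<^sup>2 \<le> R\<^sup>2" using key by (simp add: Lim_bounded)
  thus ?thesis using R0 power2_le_imp_le by blast
qed


lemma min_exists:
  fixes X :: "'b \<Rightarrow> 'a::complete_space"
  assumes H: "hadamard TYPE('a)" and fin: "finite J" and w0: "\<forall>j\<in>J. 0 \<le> w j" and w1: "(\<Sum>j\<in>J. w j) = 1"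
  shows "\<exists>y. \<forall>z. (\<Sum>j\<in>J. w j * (dist (X j) y)\<^sup>2) \<le> (\<Sum>j\<in>J. w j * (dist (X j) z)\<^sup>2)"
proof -
  define G where "G y = (\<Sum>j\<in>J. w j * (dist (X j) y)\<^sup>2)" for y
  define g where "g = Inf (range G)"
  have G0: "0 \<le> G y" for y unfolding G_def using w0 by (simp add: sum_nonneg)
  have bdd: "bdd_below (range G)" using G0 by (metis bdd_belowI2)
  have gle: "g \<le> G y" for y unfolding g_def using bdd by (simp add: cInf_lower)
  have "\<exists>y. G y < g + 1 / (real n + 1)" for n
  proof -
    have "Inf (range G) < g + 1 / (real n + 1)" unfolding g_def by (simp add: add_pos_pos)
    from cInf_lessD[OF _ this] show ?thesis by auto
  qed
  then obtain ys where ys: "\<And>n. G (ys n) < g + 1 / (real n + 1)" by metis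
  have mid: "(dist y1 y2)\<^sup>2 \<le> 2 * (G y1 - g) + 2 * (G y2 - g)" for y1 y2
  proof -
    obtain p where p: "\<forall>x. (dist x p)\<^sup>2 \<le> (dist x y1)\<^sup>2 / 2 + (dist x y2)\<^sup>2 / 2 - (dist y1 y2)\<^sup>2 / 4"
      using H unfolding hadamard_def by blast
    have c: "(\<Sum>j\<in>J. w j * c) = c" for c :: real using w1 by (simp add: sum_distrib_right[symmetric])
    have "g \<le> G p" by (rule gle)
    also have "G p \<le> (\<Sum>j\<in>J. w j * ((dist (X j) y1)\<^sup>2 / 2 + (dist (X j) y2)\<^sup>2 / 2 - (dist y1 y2)\<^sup>2 / 4))"
      unfolding G_def apply (rule sum_mono) using w0 p by (simp add: mult_left_mono)
    also have "\<dots> = (\<Sum>j\<in>J. (w j * (dist (X j) y1)\<^sup>2) / 2 + (w j * (dist (X j) y2)\<^sup>2) / 2 - w j * ((dist y1 y2)\<^sup>2 / 4))"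
      by (rule sum.cong) (simp_all add: algebra_simps)
    also have "\<dots> = G y1 / 2 + G y2 / 2 - (dist y1 y2)\<^sup>2 / 4"
      unfolding G_def by (simp only: sum.distrib sum_subtractf sum_divide_distrib[symmetric] c)
    finally show ?thesis by simp
  qed
  have cauchy: "Cauchy ys"
  proof (rule metric_CauchyI)
    fix e :: real assume e: "0 < e"
    obtain M :: nat where M: "4 / e\<^sup>2 < real M" using reals_Archimedean2 by blast
    have "\<forall>m\<ge>M. \<forall>n\<ge>M. dist (ys m) (ys n) < e"
    proof (intro allI impI)
      fix m n assume mn: "M \<le> m" "M \<le> n"
      have e2: "0 < e\<^sup>2" using e by simp
      have Mp: "0 < real M" using M e2 by (smt (verit) divide_pos_pos)
      have i1: "1 / (real m + 1) < 1 / real M" using mn Mp by (simp add: frac_less2)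
      have i2: "1 / (real n + 1) < 1 / real M" using mn Mp by (simp add: frac_less2)
      have "4 / real M < e\<^sup>2" using M e2 Mp by (simp add: field_simps)
      have "(dist (ys m) (ys n))\<^sup>2 \<le> 2 * (G (ys m) - g) + 2 * (G (ys n) - g)" by (rule mid)
      also have "\<dots> < 2 * (1 / real M) + 2 * (1 / real M)" using ys[of m] ys[of n] i1 i2 by (smt (verit))
      also have "\<dots> = 4 / real M" by simp
      also have "\<dots> < e\<^sup>2" by fact
      finally show "dist (ys m) (ys n) < e" using e by (smt (verit) power_mono zero_le_dist)
    qed
    thus "\<exists>M. \<forall>m\<ge>M. \<forall>n\<ge>M. dist (ys m) (ys n) < e" by blast
  qed
  then obtain y where y: "ys \<longlonglongrightarrow> y" using Cauchy_convergent_iff convergent_def by blast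
  have "(\<lambda>n. G (ys n)) \<longlonglongrightarrow> G y" unfolding G_def
    by (intro tendsto_intros y)
  moreover have "(\<lambda>n. g + 1 / (real n + 1)) \<longlonglongrightarrow> g + 0"
    by (intro tendsto_intros) (use LIMSEQ_inverse_real_of_nat in \<open>simp add: inverse_eq_divide add.commute\<close>)
  ultimately have "G y \<le> g + 0"
    by (rule LIMSEQ_le) (use ys less_imp_le in blast)
  hence "\<forall>z. G y \<le> G z" using gle by (metis add_0_right order_trans)
  thus ?thesis unfolding G_def by blast
qed


lemma twice_inj: "inj (\<lambda>j::int^'s. i - twice j)"
  by (rule injI) (simp add: twice_def vec_eq_iff)

lemma mask_fin: "is_mask a \<Longrightarrow> finite {j. a (i - twice j) \<noteq> 0}"
proof -
  assume "is_mask a"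
  hence "finite {i. a i \<noteq> 0}" unfolding is_mask_def by blast
  hence "finite ((\<lambda>j. i - twice j) -` {i. a i \<noteq> 0})" by (rule finite_vimageI) (rule twice_inj)
  thus ?thesis by (simp add: vimage_def)
qed

lemma vec_of_int_diff: "vec_of_int (i - twice j) = vec_of_int i - 2 *\<^sub>R vec_of_int j"
  by (simp add: vec_eq_iff vec_of_int_def twice_def)

lemma norm_neg: "is_norm N \<Longrightarrow> N (- v) = N v"
  unfolding is_norm_def by (metis abs_minus_cancel abs_one mult_1 scaleR_minus1_left)

lemma norm_sum: assumes "is_norm N" "finite A" shows "N (\<Sum>k\<in>A. g k) \<le> (\<Sum>k\<in>A. N (g k))"
  using assms(2)
proof (induction A rule: finite_induct)
  case empty thus ?case using assms(1) unfolding is_norm_def by (metis order_refl sum.empty)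
next
  case (insert x F)
  thus ?case using assms(1) unfolding is_norm_def by (simp, smt (verit))
qed

lemma norm_bound:
  assumes "is_norm N"
  shows "N v \<le> norm v * (\<Sum>k\<in>UNIV. N (axis k 1))"
proof -
  have "v = (\<Sum>k\<in>UNIV. (v $ k) *\<^sub>R axis k 1)"
    using basis_expansion[of v] by (simp add: scalar_mult_eq_scaleR)
  hence "N v \<le> (\<Sum>k\<in>UNIV. N ((v $ k) *\<^sub>R axis k 1))" using norm_sum[OF assms] by (metis finite)
  also have "\<dots> = (\<Sum>k\<in>UNIV. \<bar>v $ k\<bar> * N (axis k 1))" using assms unfolding is_norm_def by simp
  also have "\<dots> \<le> (\<Sum>k\<in>UNIV. norm v * N (axis k 1))"
    apply (rule sum_mono) apply (rule mult_right_mono) using component_le_norm_cart assms unfolding is_norm_def by auto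
  finally show ?thesis by (simp add: sum_distrib_left)
qed


theorem mainTheorem8:
  fixes N :: "real ^ 's \<Rightarrow> real"
    and f :: "real ^ 's \<Rightarrow> 'a::complete_space"
    and a :: "int ^ 's \<Rightarrow> real"
    and C r h :: real
  assumes "hadamard TYPE('a)"
    and "is_norm N"
    and "C > 0"
    and "\<forall>t u. dist (f t) (f u) \<le> C * N (t - u)"
    and "is_mask a"
    and "\<forall>i. a i \<noteq> 0 \<longrightarrow> N (vec_of_int i) \<le> r"
    and "bary_convergent a TYPE('a)"
    and "h > 0"
    and "bounded (range (\<lambda>i. f (h *\<^sub>R vec_of_int i)))"
  shows "\<forall>t. dist (bary_limit a (\<lambda>i. f (h *\<^sub>R vec_of_int i)) ((1 / h) *\<^sub>R t)) (f t) \<le> r * C * h"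
proof -
  note H = assms(1) and NN = assms(2) and C0 = assms(3) and Lip = assms(4) and M = assms(5)
    and rr = assms(6) and h0 = assms(8)
  define x where "x = (\<lambda>i. f (h *\<^sub>R vec_of_int i))"
  define E where "E n = r * C * h * (1 - 1 / 2 ^ n)" for n :: nat
  have w0: "\<forall>j\<in>{j. a (i - twice j) \<noteq> 0}. 0 \<le> a (i - twice j)" for i
    using M unfolding is_mask_def by blast
  have w1: "(\<Sum>j\<in>{j. a (i - twice j) \<noteq> 0}. a (i - twice j)) = 1" for i
    using M unfolding is_mask_def by blast
  have r0: "0 \<le> r"
  proof -
    have "{j. a (0 - twice j) \<noteq> 0} \<noteq> {}" proof
      assume "{j. a (0 - twice j) \<noteq> 0} = {}"
      with w1[of 0] show False by simp
    qed
    then obtain j where "a (0 - twice j) \<noteq> 0" by blast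
    thus ?thesis using rr NN unfolding is_norm_def by (meson order_trans)
  qed
  have iter: "\<forall>i. dist ((bary_step a ^^ n) x i) (f ((h / 2 ^ n) *\<^sub>R vec_of_int i)) \<le> E n" for n
  proof (induction n)
    case 0
    show ?case by (simp add: x_def E_def)
  next
    case (Suc n)
    show ?case
    proof
      fix i
      define X where "X = (bary_step a ^^ n) x"
      define J where "J = {j. a (i - twice j) \<noteq> 0}"
      define y where "y = bary_step a X i"
      have fin: "finite J" unfolding J_def by (rule mask_fin[OF M])
      have ymin: "\<forall>z. (\<Sum>j\<in>J. a (i - twice j) * (dist (X j) y)\<^sup>2) \<le> (\<Sum>j\<in>J. a (i - twice j) * (dist (X j) z)\<^sup>2)"
        using someI_ex[OF min_exists[where w="\<lambda>j. a (i - twice j)" and J=J and X=X, OF H fin]] w0 w1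
        unfolding y_def bary_step_def J_def by simp
      define z where "z = f ((h / 2 ^ Suc n) *\<^sub>R vec_of_int i)"
      have R: "\<forall>j\<in>J. dist (X j) z \<le> E n + C * (h / 2 ^ Suc n * r)"
      proof
        fix j assume j: "j \<in> J"
        have vv: "(h / 2 ^ n) *\<^sub>R vec_of_int j - (h / 2 ^ Suc n) *\<^sub>R vec_of_int i
             = (- (h / 2 ^ Suc n)) *\<^sub>R vec_of_int (i - twice j)"
          by (simp add: vec_of_int_diff vec_eq_iff field_simps)
        have "N ((h / 2 ^ n) *\<^sub>R vec_of_int j - (h / 2 ^ Suc n) *\<^sub>R vec_of_int i)
            = h / 2 ^ Suc n * N (vec_of_int (i - twice j))"
          unfolding vv scaleR_minus_left norm_neg[OF NN] using NN h0 unfolding is_norm_def by simp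
        also have "\<dots> \<le> h / 2 ^ Suc n * r"
          using j rr h0 unfolding J_def by (intro mult_left_mono) auto
        finally have n1: "N ((h / 2 ^ n) *\<^sub>R vec_of_int j - (h / 2 ^ Suc n) *\<^sub>R vec_of_int i) \<le> h / 2 ^ Suc n * r" .
        have "dist (X j) z \<le> dist (X j) (f ((h / 2 ^ n) *\<^sub>R vec_of_int j)) + dist (f ((h / 2 ^ n) *\<^sub>R vec_of_int j)) z"
          by (rule dist_triangle)
        also have "\<dots> \<le> E n + C * (h / 2 ^ Suc n * r)"
          apply (rule add_mono)
          using Suc.IH unfolding X_def apply blast
          using Lip[rule_format, of "(h / 2 ^ n) *\<^sub>R vec_of_int j" "(h / 2 ^ Suc n) *\<^sub>R vec_of_int i"] n1 C0
          unfolding z_def by (smt (verit) mult_left_mono)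
        finally show "dist (X j) z \<le> E n + C * (h / 2 ^ Suc n * r)" .
      qed
      have "dist y z \<le> E n + C * (h / 2 ^ Suc n * r)"
        by (rule min_bound[OF H fin _ _ ymin R]) (use w0 w1 J_def in auto)
      moreover have "E n + C * (h / 2 ^ Suc n * r) = E (Suc n)"
        unfolding E_def by (simp add: field_simps)
      ultimately show "dist ((bary_step a ^^ Suc n) x i) (f ((h / 2 ^ Suc n) *\<^sub>R vec_of_int i)) \<le> E (Suc n)"
        unfolding y_def X_def z_def by simp
    qed
  qed
  have Eb: "E n \<le> r * C * h" for n
  proof -
    have "0 \<le> r * C * h" using r0 C0 h0 by simp
    moreover have "1 - 1 / 2 ^ n \<le> (1::real)" by simp
    ultimately show ?thesis unfolding E_def by (metis mult_left_mono mult.right_neutral)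
  qed
  obtain F0 where "is_bary_limit a x F0" using assms(7) assms(9) unfolding bary_convergent_def x_def by blast
  hence "is_bary_limit a x (bary_limit a x)" unfolding bary_limit_def by (rule someI[where P="is_bary_limit a x"])
  then obtain G where Gdef: "G = bary_limit a x" and Gc: "continuous_on UNIV G"
    and Gl: "\<And>e. e > 0 \<Longrightarrow> \<forall>\<^sub>F n in sequentially. \<forall>j.
        dist (G ((1 / 2 ^ n) *\<^sub>R vec_of_int j)) ((bary_step a ^^ n) x j) \<le> e"
    unfolding is_bary_limit_def by blast
  define K where "K = (\<Sum>k\<in>UNIV. N (axis k 1))"
  have K0: "0 \<le> K" unfolding K_def using NN unfolding is_norm_def by (simp add: sum_nonneg)
  have "(C * K)-lipschitz_on UNIV f"
  proof (rule lipschitz_onI)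
    fix t u :: "real^'s"
    have "dist (f t) (f u) \<le> C * N (t - u)" using Lip by blast
    also have "\<dots> \<le> C * (norm (t - u) * K)" using norm_bound[OF NN, of "t - u"] C0 unfolding K_def
      by (intro mult_left_mono) auto
    finally show "dist (f t) (f u) \<le> C * K * dist t u" by (simp add: dist_norm algebra_simps)
  qed (use C0 K0 in simp)
  hence fc: "continuous_on UNIV f" by (rule lipschitz_on_continuous_on)
  show ?thesis
  proof
    fix t :: "real^'s"
    define s where "s = (1 / h) *\<^sub>R t"
    have hs: "h *\<^sub>R s = t" unfolding s_def using h0 by simp
    define jn where "jn n = (\<chi> k. \<lfloor>2 ^ n * s $ k\<rfloor>)" for n :: nat
    define u where "u n = (1 / 2 ^ n) *\<^sub>R vec_of_int (jn n)" for n :: nat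
    have u: "u \<longlonglongrightarrow> s"
    proof (rule vec_tendstoI)
      fix k
      have eq: "u n $ k = real_of_int \<lfloor>2 ^ n * s $ k\<rfloor> / 2 ^ n" for n
        unfolding u_def jn_def vec_of_int_def by simp
      have lo: "s $ k - 1 / 2 ^ n \<le> u n $ k" for n
      proof -
        have "2 ^ n * s $ k - 1 \<le> real_of_int \<lfloor>2 ^ n * s $ k\<rfloor>" by linarith
        hence "(2 ^ n * s $ k - 1) / 2 ^ n \<le> real_of_int \<lfloor>2 ^ n * s $ k\<rfloor> / 2 ^ n"
          by (rule divide_right_mono) simp
        moreover have "(2 ^ n * s $ k - 1) / 2 ^ n = s $ k - 1 / 2 ^ n" by (simp add: field_simps)
        ultimately show ?thesis unfolding eq by simp
      qed
      have hi: "u n $ k \<le> s $ k" for n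
      proof -
        have "real_of_int \<lfloor>2 ^ n * s $ k\<rfloor> \<le> 2 ^ n * s $ k" by linarith
        hence "real_of_int \<lfloor>2 ^ n * s $ k\<rfloor> / 2 ^ n \<le> 2 ^ n * s $ k / 2 ^ n"
          by (rule divide_right_mono) simp
        thus ?thesis unfolding eq by simp
      qed
      have l1: "(\<lambda>n. s $ k - 1 / 2 ^ n) \<longlonglongrightarrow> s $ k - 0"
        by (intro tendsto_intros pow_half_0)
      show "((\<lambda>n. u n $ k) \<longlongrightarrow> s $ k) sequentially"
        by (rule tendsto_sandwich[of "\<lambda>n. s $ k - 1 / 2 ^ n" _ _ "\<lambda>_. s $ k"])
           (use lo hi l1 in auto)
    qed
    have Gu: "(\<lambda>n. G (u n)) \<longlonglongrightarrow> G s"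
      using continuous_on_tendsto_compose[OF Gc u] by (simp add: o_def)
    have "(\<lambda>n. h *\<^sub>R u n) \<longlonglongrightarrow> h *\<^sub>R s" by (intro tendsto_intros u)
    hence fu: "(\<lambda>n. f (h *\<^sub>R u n)) \<longlonglongrightarrow> f t"
      using continuous_on_tendsto_compose[OF fc] hs by (simp add: o_def)
    have "dist (G s) (f t) \<le> r * C * h + e" if e: "0 < e" for e
    proof -
      have ev: "\<forall>\<^sub>F n in sequentially. dist (G s) (f t)
          \<le> dist (G s) (G (u n)) + (e + r * C * h) + dist (f (h *\<^sub>R u n)) (f t)"
        using Gl[OF e]
      proof eventually_elim
        case (elim n)
        have "dist (G (u n)) ((bary_step a ^^ n) x (jn n)) \<le> e" using elim unfolding u_def by blast
        moreover have "dist ((bary_step a ^^ n) x (jn n)) (f (h *\<^sub>R u n)) \<le> E n"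
          using iter[of n] unfolding u_def by simp
        ultimately have "dist (G (u n)) (f (h *\<^sub>R u n)) \<le> e + r * C * h"
          using Eb[of n] dist_triangle[of "G (u n)" "f (h *\<^sub>R u n)" "(bary_step a ^^ n) x (jn n)"] by linarith
        thus ?case using dist_triangle[of "G s" "f t" "G (u n)"] dist_triangle[of "G (u n)" "f t" "f (h *\<^sub>R u n)"]
          by linarith
      qed
      have lim: "(\<lambda>n. dist (G s) (G (u n)) + (e + r * C * h) + dist (f (h *\<^sub>R u n)) (f t))
          \<longlonglongrightarrow> dist (G s) (G s) + (e + r * C * h) + dist (f t) (f t)"
        by (intro tendsto_intros Gu fu)
      have "dist (G s) (f t) \<le> dist (G s) (G s) + (e + r * C * h) + dist (f t) (f t)"
        by (rule tendsto_le[OF _ lim tendsto_const ev]) simp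
      thus ?thesis by simp
    qed
    hence "dist (G s) (f t) \<le> r * C * h" by (rule field_le_epsilon)
    thus "dist (bary_limit a (\<lambda>i. f (h *\<^sub>R vec_of_int i)) ((1 / h) *\<^sub>R t)) (f t) \<le> r * C * h"
      unfolding Gdef x_def s_def .
  qed
qed

end
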